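(* Let $G$ be a minimal DPDP-graph and let $(D,P)$ be a DP-pair in $G$. Then: (1) $D$ is a maximal independent set in $G$. (2) The induced subgraph $G[P]$ consists of independent edges, i.e., $\delta(G[P])=\Delta(G[P])=1$. (3) If $x\in P$, then $|N_G(x)\setminus P|=1$ or $N_G(x)\setminus P$ is a nonempty subset of the set $L_G$ of leaves of $G$. (4) $G$ is a 2-subdivision graph $S_2(H)$ of some graph $H$ (without isolated vertices, with respect to some function $\alpha$).
   Context: Graphs are finite and may have multiple edges and loops. A leaf is a vertex of degree one. A set $D\subseteq V(G)$ is dominating if every vertex outside $D$ has a neighbor in $D$; $P$ is paired-dominating if it is dominating and the subgraph induced by $P$ has a perfect matching. A DP-pair of $G$ is a pair $(D,P)$ of disjoint sets with $V(G)=D\cup P$, $D$ dominating and $P$ paired-dominating. A DPDP-graph is a graph with a DP-pair; a minimal DPDP-graph is a DPDP-graph no proper spanning subgraph of which is a DPDP-graph. 2-subdivision graph: for a graph $H$ with no isolated vertex, set of leaves $L_H$, and $\alpha:L_H\to\mathbb{N}=\{1,2,\dots\}$, $S_2(H)$ has vertex set $(V_H\setminus L_H)\cup\{(v,i): v\in L_H, 1\le i\le \alpha(v)\}$ together with two new vertices for each edge $e$ of $H$ ($u_e,v_e$ if $e$ joins $u\ne v$; $v_e^1,v_e^2$ if $e$ is a loop at $v$). Its edges are: the edge joining the two new vertices of each $e$; for $v\in V_H\setminus L_H$, $vv_e$ for each non-loop edge $e$ at $v$ and $vv_e^1,vv_e^2$ for each loop $e$ at $v$; for $v\in L_H$ with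 incident edge $e$, the edges $v_e(v,i)$, $1\le i\le\alpha(v)$. *)

theory Defs
  imports Main
begin

text \<open>Finite multigraphs with loops. Each edge has an (arbitrarily oriented)
pair of end vertices; the graph is undirected, orientation carries no meaning.
A loop is an edge whose two ends coincide.\<close>

record ('v,'e) mgraph =
  verts :: "'v set"
  edges :: "'e set"
  ends  :: "'e \<Rightarrow> 'v \<times> 'v"

definition wf_mgraph :: "('v,'e) mgraph \<Rightarrow> bool" where
  "wf_mgraph G \<longleftrightarrow> finite (verts G) \<and> finite (edges G) \<and>
     (\<forall>e\<in>edges G. fst (ends G e) \<in> verts G \<and> snd (ends G e) \<in> verts G)"

text \<open>Degree: loops count twice.\<close>
definition deg :: "('v,'e) mgraph \<Rightarrow> 'v \<Rightarrow> nat" where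
  "deg G v = card {e\<in>edges G. fst (ends G e) = v} + card {e\<in>edges G. snd (ends G e) = v}"

definition leaves :: "('v,'e) mgraph \<Rightarrow> 'v set" where
  "leaves G = {v\<in>verts G. deg G v = 1}"

definition adj :: "('v,'e) mgraph \<Rightarrow> 'v \<Rightarrow> 'v \<Rightarrow> bool" where
  "adj G u v \<longleftrightarrow> (\<exists>e\<in>edges G. ends G e = (u,v) \<or> ends G e = (v,u))"

definition nbhd :: "('v,'e) mgraph \<Rightarrow> 'v \<Rightarrow> 'v set" where
  "nbhd G v = {u\<in>verts G. adj G v u}"

definition induced :: "('v,'e) mgraph \<Rightarrow> 'v set \<Rightarrow> ('v,'e) mgraph" where
  "induced G S = \<lparr>verts = S,
     edges = {e\<in>edges G. fst (ends G e) \<in> S \<and> snd (ends G e) \<in> S},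
     ends = ends G\<rparr>"

definition dominating :: "('v,'e) mgraph \<Rightarrow> 'v set \<Rightarrow> bool" where
  "dominating G D \<longleftrightarrow> D \<subseteq> verts G \<and> (\<forall>v\<in>verts G - D. \<exists>u\<in>D. adj G v u)"

definition perfect_matching_induced :: "('v,'e) mgraph \<Rightarrow> 'v set \<Rightarrow> 'e set \<Rightarrow> bool" where
  "perfect_matching_induced G P M \<longleftrightarrow> M \<subseteq> edges G \<and>
     (\<forall>e\<in>M. fst (ends G e) \<in> P \<and> snd (ends G e) \<in> P \<and> fst (ends G e) \<noteq> snd (ends G e)) \<and>
     (\<forall>e\<in>M. \<forall>e'\<in>M. e \<noteq> e' \<longrightarrow>
        {fst (ends G e), snd (ends G e)} \<inter> {fst (ends G e'), snd (ends G e')} = {}) \<and>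
     (\<forall>x\<in>P. \<exists>e\<in>M. x = fst (ends G e) \<or> x = snd (ends G e))"

definition paired_dominating :: "('v,'e) mgraph \<Rightarrow> 'v set \<Rightarrow> bool" where
  "paired_dominating G P \<longleftrightarrow> dominating G P \<and> (\<exists>M. perfect_matching_induced G P M)"

definition dp_pair :: "('v,'e) mgraph \<Rightarrow> 'v set \<Rightarrow> 'v set \<Rightarrow> bool" where
  "dp_pair G D P \<longleftrightarrow> D \<inter> P = {} \<and> D \<union> P = verts G \<and> dominating G D \<and> paired_dominating G P"

definition dpdp_graph :: "('v,'e) mgraph \<Rightarrow> bool" where
  "dpdp_graph G \<longleftrightarrow> (\<exists>D P. dp_pair G D P)"

definition minimal_dpdp_graph :: "('v,'e) mgraph \<Rightarrow> bool" where
  "minimal_dpdp_graph G \<longleftrightarrow> dpdp_graph G \<and>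
     (\<forall>E'. E' \<subset> edges G \<longrightarrow> \<not> dpdp_graph (G\<lparr>edges := E'\<rparr>))"

definition independent :: "('v,'e) mgraph \<Rightarrow> 'v set \<Rightarrow> bool" where
  "independent G S \<longleftrightarrow> S \<subseteq> verts G \<and> (\<forall>u\<in>S. \<forall>v\<in>S. \<not> adj G u v)"

definition maximal_independent :: "('v,'e) mgraph \<Rightarrow> 'v set \<Rightarrow> bool" where
  "maximal_independent G S \<longleftrightarrow> independent G S \<and>
     (\<forall>T. independent G T \<and> S \<subseteq> T \<longrightarrow> T = S)"

definition mg_iso :: "('v,'e) mgraph \<Rightarrow> ('w,'f) mgraph \<Rightarrow> bool" where
  "mg_iso G K \<longleftrightarrow> (\<exists>f g. bij_betw f (verts G) (verts K) \<and> bij_betw g (edges G) (edges K) \<and>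
     (\<forall>e\<in>edges G. ends K (g e) = (f (fst (ends G e)), f (snd (ends G e))) \<or>
                  ends K (g e) = (f (snd (ends G e)), f (fst (ends G e)))))"

text \<open>For an edge e of H with ends (u,w), the two new
vertices are New e True (attached to u) and New e False (attached to w); for a
loop (u = w) these are v_e^1, v_e^2. A leaf v is replaced by copies LCopy v i,
1 <= i <= alpha v.\<close>

datatype ('a,'b) s2vert = Old 'a | LCopy 'a nat | New 'b bool
datatype ('a,'b) s2edge = EMid 'b | EAtt 'b bool | ELeaf 'b bool nat

definition endp :: "('a,'b) mgraph \<Rightarrow> bool \<Rightarrow> 'b \<Rightarrow> 'a" where
  "endp H b e = (if b then fst (ends H e) else snd (ends H e))"

definition S2 :: "('a,'b) mgraph \<Rightarrow> ('a \<Rightarrow> nat) \<Rightarrow> (('a,'b) s2vert, ('a,'b) s2edge) mgraph" where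
  "S2 H \<alpha> = \<lparr>
     verts = Old ` (verts H - leaves H)
             \<union> {LCopy v i | v i. v \<in> leaves H \<and> 1 \<le> i \<and> i \<le> \<alpha> v}
             \<union> {New e b | e b. e \<in> edges H},
     edges = EMid ` edges H
             \<union> {EAtt e b | e b. e \<in> edges H \<and> endp H b e \<notin> leaves H}
             \<union> {ELeaf e b i | e b i. e \<in> edges H \<and> endp H b e \<in> leaves H \<and> 1 \<le> i \<and> i \<le> \<alpha> (endp H b e)},
     ends = (\<lambda>x. case x of
               EMid e \<Rightarrow> (New e True, New e False)
             | EAtt e b \<Rightarrow> (Old (endp H b e), New e b)
             | ELeaf e b i \<Rightarrow> (LCopy (endp H b e) i, New e b))\<rparr>"

definition no_isolated :: "('v,'e) mgraph \<Rightarrow> bool" where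
  "no_isolated H \<longleftrightarrow> (\<forall>v\<in>verts H. deg H v \<noteq> 0)"

end

theory Submission
  imports Defs
begin

lemma iso_from_inv:
  fixes K :: "('w,'f) mgraph" and G :: "('v,'e) mgraph"
  assumes bv: "bij_betw \<phi> (verts K) (verts G)" and be: "bij_betw \<psi> (edges K) (edges G)"
    and wk: "\<forall>x\<in>edges K. fst (ends K x) \<in> verts K \<and> snd (ends K x) \<in> verts K"
    and cp: "\<forall>x\<in>edges K. ends G (\<psi> x) = (\<phi> (fst (ends K x)), \<phi> (snd (ends K x)))
              \<or> ends G (\<psi> x) = (\<phi> (snd (ends K x)), \<phi> (fst (ends K x)))"
  shows "mg_iso G K"
proof -
  let ?f = "inv_into (verts K) \<phi>" and ?g = "inv_into (edges K) \<psi>"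
  have 1: "bij_betw ?f (verts G) (verts K)" using bv by (rule bij_betw_inv_into)
  have 2: "bij_betw ?g (edges G) (edges K)" using be by (rule bij_betw_inv_into)
  have ij: "inj_on \<phi> (verts K)" using bv bij_betw_def by blast
  have 3: "ends K (?g e) = (?f (fst (ends G e)), ?f (snd (ends G e))) \<or>
           ends K (?g e) = (?f (snd (ends G e)), ?f (fst (ends G e)))" if e: "e \<in> edges G" for e
  proof -
    have x: "?g e \<in> edges K" using 2 e bij_betwE by blast
    have px: "\<psi> (?g e) = e" using be e by (simp add: bij_betw_imp_surj_on f_inv_into_f)
    obtain p q where pq: "ends K (?g e) = (p,q)" by fastforce
    have pqv: "p \<in> verts K" "q \<in> verts K" using wk x pq by force+
    have fp: "?f (\<phi> p) = p" "?f (\<phi> q) = q" using ij pqv by (simp_all add: inv_into_f_f)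
    from cp x px pq have "ends G e = (\<phi> p, \<phi> q) \<or> ends G e = (\<phi> q, \<phi> p)" by force
    then show ?thesis using fp pq by auto
  qed
  show ?thesis unfolding mg_iso_def using 1 2 3 by blast
qed

locale mdp =
  fixes G :: "('v,'e) mgraph" and D P :: "'v set" and M :: "'e set"
  assumes wf: "wf_mgraph G" and mn: "minimal_dpdp_graph G" and dpp: "dp_pair G D P"
    and pm: "perfect_matching_induced G P M"
begin

abbreviation "s e \<equiv> fst (ends G e)"
abbreviation "t e \<equiv> snd (ends G e)"

definition lk :: "'e \<Rightarrow> 'v \<Rightarrow> 'v \<Rightarrow> bool" where
  "lk e x y \<longleftrightarrow> e \<in> edges G \<and> (ends G e = (x,y) \<or> ends G e = (y,x))"

lemma lk_sym: "lk e x y \<Longrightarrow> lk e y x" unfolding lk_def by auto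

lemma adj_lk: "adj G x y \<longleftrightarrow> (\<exists>e. lk e x y)" unfolding adj_def lk_def by auto

lemma DP: "D \<inter> P = {}" "D \<union> P = verts G" using dpp unfolding dp_pair_def by auto

lemma DPd: "x \<in> D \<Longrightarrow> x \<in> P \<Longrightarrow> False" using DP(1) by blast

lemma fin: "finite (verts G)" "finite (edges G)" using wf unfolding wf_mgraph_def by auto

lemma ends_in: "e \<in> edges G \<Longrightarrow> s e \<in> D \<union> P \<and> t e \<in> D \<union> P"
  using wf DP unfolding wf_mgraph_def by auto

lemma lk_in: "lk e x y \<Longrightarrow> x \<in> D \<union> P \<and> y \<in> D \<union> P"
  unfolding lk_def using ends_in by (metis fst_conv snd_conv)

lemma Ddom: "v \<in> P \<Longrightarrow> \<exists>u\<in>D. \<exists>e. lk e v u"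
  using dpp DP unfolding dp_pair_def dominating_def adj_lk by blast

lemma Pdom: "v \<in> D \<Longrightarrow> \<exists>u\<in>P. \<exists>e. lk e v u"
  using dpp DP unfolding dp_pair_def paired_dominating_def dominating_def adj_lk by blast

lemma M_sub: "M \<subseteq> edges G" using pm unfolding perfect_matching_induced_def by auto
lemma M_ends: "m \<in> M \<Longrightarrow> s m \<in> P \<and> t m \<in> P \<and> s m \<noteq> t m"
  using pm unfolding perfect_matching_induced_def by auto
lemma M_disj: "m \<in> M \<Longrightarrow> m' \<in> M \<Longrightarrow> m \<noteq> m' \<Longrightarrow> {s m, t m} \<inter> {s m', t m'} = {}"
  using pm unfolding perfect_matching_induced_def by auto
lemma M_cov: "x \<in> P \<Longrightarrow> \<exists>m\<in>M. x = s m \<or> x = t m"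
  using pm unfolding perfect_matching_induced_def by auto

lemma removal:
  assumes e: "e \<in> edges G" and nm: "e \<notin> M"
    and h1: "\<forall>v\<in>P. \<exists>u\<in>D. \<exists>e'. e' \<noteq> e \<and> lk e' v u"
    and h2: "\<forall>v\<in>D. \<exists>u\<in>P. \<exists>e'. e' \<noteq> e \<and> lk e' v u"
  shows False
proof -
  let ?G = "G\<lparr>edges := edges G - {e}\<rparr>"
  have a: "adj ?G v u" if "e' \<noteq> e" "lk e' v u" for v u e'
    using that unfolding adj_def lk_def by auto
  have "dp_pair ?G D P"
    unfolding dp_pair_def paired_dominating_def dominating_def
  proof (intro conjI)
    show "D \<inter> P = {}" "D \<union> P = verts ?G" using DP by auto
    show "D \<subseteq> verts ?G" "P \<subseteq> verts ?G" using DP by auto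
    show "\<forall>v\<in>verts ?G - D. \<exists>u\<in>D. adj ?G v u"
    proof
      fix v assume "v \<in> verts ?G - D" then have "v \<in> P" using DP by auto
      then obtain u e' where "u \<in> D" "e' \<noteq> e" "lk e' v u" using h1 by blast
      then show "\<exists>u\<in>D. adj ?G v u" using a by blast
    qed
    show "\<forall>v\<in>verts ?G - P. \<exists>u\<in>P. adj ?G v u"
    proof
      fix v assume "v \<in> verts ?G - P" then have "v \<in> D" using DP by auto
      then obtain u e' where "u \<in> P" "e' \<noteq> e" "lk e' v u" using h2 by blast
      then show "\<exists>u\<in>P. adj ?G v u" using a by blast
    qed
    have "M \<subseteq> edges ?G" using M_sub nm by auto
    then have "perfect_matching_induced ?G P M"
      using pm unfolding perfect_matching_induced_def by simp
    then show "\<exists>M. perfect_matching_induced ?G P M" by blast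
  qed
  then have "dpdp_graph ?G" unfolding dpdp_graph_def by blast
  moreover have "edges G - {e} \<subset> edges G" using e by auto
  ultimately show False using mn unfolding minimal_dpdp_graph_def by blast
qed

lemma lk_uniq:
  assumes "lk e x y" "lk e x' y'" "x \<in> D" "x' \<in> D" "y \<in> P" "y' \<in> P"
  shows "x = x' \<and> y = y'"
  using assms DP(1) unfolding lk_def by auto

lemma F1: assumes e: "e \<in> edges G" and d: "s e \<in> D" "t e \<in> D" shows False
proof (rule removal[OF e])
  show "e \<notin> M" using M_ends d DP(1) by blast
  show "\<forall>v\<in>P. \<exists>u\<in>D. \<exists>e'. e' \<noteq> e \<and> lk e' v u"
  proof
    fix v assume v: "v \<in> P"
    then obtain u e' where u: "u \<in> D" "lk e' v u" using Ddom by blast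
    have "e' \<noteq> e" using u v d DP(1) unfolding lk_def by auto
    then show "\<exists>u\<in>D. \<exists>e'. e' \<noteq> e \<and> lk e' v u" using u by blast
  qed
  show "\<forall>v\<in>D. \<exists>u\<in>P. \<exists>e'. e' \<noteq> e \<and> lk e' v u"
  proof
    fix v assume v: "v \<in> D"
    then obtain u e' where u: "u \<in> P" "lk e' v u" using Pdom by blast
    have "e' \<noteq> e" using u v d DP(1) unfolding lk_def by auto
    then show "\<exists>u\<in>P. \<exists>e'. e' \<noteq> e \<and> lk e' v u" using u by blast
  qed
qed

lemma F2: assumes e: "e \<in> edges G" and d: "s e \<in> P" "t e \<in> P" shows "e \<in> M"
proof (rule ccontr)
  assume nm: "e \<notin> M"
  show False
  proof (rule removal[OF e nm])
  show "\<forall>v\<in>P. \<exists>u\<in>D. \<exists>e'. e' \<noteq> e \<and> lk e' v u"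
  proof
    fix v assume v: "v \<in> P"
    then obtain u e' where u: "u \<in> D" "lk e' v u" using Ddom by blast
    have "e' \<noteq> e" using u v d DP(1) unfolding lk_def by auto
    then show "\<exists>u\<in>D. \<exists>e'. e' \<noteq> e \<and> lk e' v u" using u by blast
  qed
  show "\<forall>v\<in>D. \<exists>u\<in>P. \<exists>e'. e' \<noteq> e \<and> lk e' v u"
  proof
    fix v assume v: "v \<in> D"
    then obtain u e' where u: "u \<in> P" "lk e' v u" using Pdom by blast
    have "e' \<noteq> e" using u v d DP(1) unfolding lk_def by auto
    then show "\<exists>u\<in>P. \<exists>e'. e' \<noteq> e \<and> lk e' v u" using u by blast
  qed
  qed
qed

lemma lk_DP: assumes "lk e d y" "d \<in> D" shows "y \<in> P"
proof -
  have "e \<in> edges G" using assms unfolding lk_def by auto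
  then have "y \<notin> D" using F1 assms unfolding lk_def by (metis fst_conv snd_conv)
  then show ?thesis using lk_in assms by blast
qed

lemma E3:
  assumes l: "lk e d a" and d: "d \<in> D" and a: "a \<in> P"
  shows "(\<forall>e' y. lk e' d y \<longrightarrow> e' = e) \<or> (\<forall>e' d'. lk e' a d' \<longrightarrow> d' \<in> D \<longrightarrow> e' = e)"
proof (rule ccontr)
  assume "\<not> ?thesis"
  then obtain e1 y e2 d2 where 1: "lk e1 d y" "e1 \<noteq> e" and 2: "lk e2 a d2" "d2 \<in> D" "e2 \<noteq> e"
    by blast
  have y: "y \<in> P" using lk_DP 1 d by blast
  have e: "e \<in> edges G" using l unfolding lk_def by auto
  show False
  proof (rule removal[OF e])
    show "e \<notin> M"
    proof
      assume "e \<in> M" then have "s e \<in> P \<and> t e \<in> P" using M_ends by blast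
      with l d DP(1) show False unfolding lk_def by auto
    qed
    show "\<forall>v\<in>P. \<exists>u\<in>D. \<exists>e'. e' \<noteq> e \<and> lk e' v u"
    proof
      fix v assume v: "v \<in> P"
      then obtain u e' where u: "u \<in> D" "lk e' v u" using Ddom by blast
      show "\<exists>u\<in>D. \<exists>e'. e' \<noteq> e \<and> lk e' v u"
      proof (cases "e' = e")
        case True
        then have "v = a" using lk_uniq[of e u v d a] u v d a l lk_sym by blast
        then show ?thesis using 2 by blast
      qed (use u in blast)
    qed
    show "\<forall>v\<in>D. \<exists>u\<in>P. \<exists>e'. e' \<noteq> e \<and> lk e' v u"
    proof
      fix v assume v: "v \<in> D"
      then obtain u e' where u: "u \<in> P" "lk e' v u" using Pdom by blast
      show "\<exists>u\<in>P. \<exists>e'. e' \<noteq> e \<and> lk e' v u"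
      proof (cases "e' = e")
        case True
        then have "v = d" using lk_uniq[of e v u d a] u v d a l by blast
        then show ?thesis using 1 y by blast
      qed (use u in blast)
    qed
  qed
qed

lemma C1: "lk e d a \<Longrightarrow> lk e' d a \<Longrightarrow> d \<in> D \<Longrightarrow> a \<in> P \<Longrightarrow> e' = e"
  using E3 lk_sym by blast

definition ND :: "'v \<Rightarrow> 'v set" where "ND a = {d\<in>D. adj G a d}"

lemma ND_fin: "finite (ND a)" using fin(1) DP(2) unfolding ND_def
  by (metis (no_types, lifting) Un_iff mem_Collect_eq rev_finite_subset subsetI)

lemma ND_ne: "a \<in> P \<Longrightarrow> ND a \<noteq> {}" using Ddom unfolding ND_def adj_lk by blast

lemma C2:
  assumes a: "a \<in> P" and dd: "d \<in> ND a" "d' \<in> ND a" "d \<noteq> d'" and l: "lk e a d"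
  shows "\<forall>e' y. lk e' d y \<longrightarrow> e' = e"
proof -
  have d: "d \<in> D" "d' \<in> D" using dd unfolding ND_def by auto
  obtain e' where e': "lk e' a d'" using dd unfolding ND_def adj_lk by auto
  have "\<not> (\<forall>e' d'. lk e' a d' \<longrightarrow> d' \<in> D \<longrightarrow> e' = e)"
  proof
    assume "\<forall>e' d'. lk e' a d' \<longrightarrow> d' \<in> D \<longrightarrow> e' = e"
    then have "e' = e" using e' d by blast
    then show False using lk_uniq[of e d a d' a] l e' d a dd(3) lk_sym by blast
  qed
  then show ?thesis using E3[of e d a] l lk_sym d a by blast
qed

lemma C3:
  assumes d: "d \<in> D" and a: "a \<in> P" "a' \<in> P" "a \<noteq> a'" and ad: "adj G d a" "adj G d a'"
  shows "ND a = {d}"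
proof -
  have dn: "d \<in> ND a" using d ad unfolding ND_def adj_lk using lk_sym by blast
  have "d' = d" if d': "d' \<in> ND a" for d'
  proof (rule ccontr)
    assume ne: "d' \<noteq> d"
    obtain e where e: "lk e a d" using dn unfolding ND_def adj_lk by auto
    have 1: "\<forall>e' y. lk e' d y \<longrightarrow> e' = e" using C2[OF a(1) dn d' ] ne e by auto
    obtain e' where e': "lk e' d a'" using ad adj_lk by auto
    then have "e' = e" using 1 by blast
    then show False using lk_uniq[of e d a d a'] e e' lk_sym d a by blast
  qed
  then show ?thesis using dn by blast
qed

lemma part1: "maximal_independent G D"
proof -
  have "\<not> adj G u v" if "u \<in> D" "v \<in> D" for u v
  proof
    assume "adj G u v"
    then obtain e where "lk e u v" using adj_lk by blast
    then have "v \<in> P" using lk_DP that by blast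
    then show False using that DP(1) by blast
  qed
  then have ind: "independent G D"
    unfolding independent_def using DP by blast
  have "T = D" if T: "independent G T" "D \<subseteq> T" for T
  proof (rule ccontr)
    assume "T \<noteq> D"
    then obtain x where x: "x \<in> T" "x \<notin> D" using T by blast
    then have "x \<in> P" using T DP unfolding independent_def by blast
    then obtain u e where "u \<in> D" "lk e x u" using Ddom by blast
    then have "adj G x u" using adj_lk by blast
    moreover have "u \<in> T" using T \<open>u \<in> D\<close> by blast
    ultimately show False using T x unfolding independent_def by blast
  qed
  then show ?thesis using ind unfolding maximal_independent_def by blast
qed

lemma s_inj: assumes "m \<in> M" "m' \<in> M" "s m = s m'" shows "m = m'"
proof (rule ccontr)
  assume "m \<noteq> m'"
  then have "{s m, t m} \<inter> {s m', t m'} = {}" using M_disj assms by blast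
  then have "s m \<noteq> s m'" by blast
  then show False using assms by simp
qed
lemma t_inj: assumes "m \<in> M" "m' \<in> M" "t m = t m'" shows "m = m'"
proof (rule ccontr)
  assume "m \<noteq> m'"
  then have "{s m, t m} \<inter> {s m', t m'} = {}" using M_disj assms by blast
  then have "t m \<noteq> t m'" by blast
  then show False using assms by simp
qed
lemma st_ne: assumes "m \<in> M" "m' \<in> M" "s m = t m'" shows False
proof (cases "m = m'")
  case True then show False using M_ends assms by simp
next
  case False
  then have "{s m, t m} \<inter> {s m', t m'} = {}" using M_disj assms by blast
  then have "s m \<noteq> t m'" by blast
  then show False using assms by simp
qed

lemma part2: "x \<in> P \<Longrightarrow> deg (induced G P) x = 1"
proof -
  assume x: "x \<in> P"
  have "{e\<in>edges G. s e \<in> P \<and> t e \<in> P} = M"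
  proof
    show "{e\<in>edges G. s e \<in> P \<and> t e \<in> P} \<subseteq> M" using F2 by blast
    show "M \<subseteq> {e\<in>edges G. s e \<in> P \<and> t e \<in> P}" using M_sub M_ends by blast
  qed
  then have E: "edges (induced G P) = M" unfolding induced_def by simp
  have en: "ends (induced G P) = ends G" unfolding induced_def by simp
  obtain m where m: "m \<in> M" "x = s m \<or> x = t m" using M_cov x by blast
  show ?thesis
  proof (cases "x = s m")
    case True
    have "{e\<in>M. s e = x} = {m}" using True m(1) s_inj by auto
    moreover have Z: "{e\<in>M. t e = x} = {}"
    proof -
      have False if "e \<in> M" "t e = x" for e using st_ne[of m e] that True m(1) by simp
      then show ?thesis by blast
    qed
    ultimately show ?thesis unfolding deg_def E en by (simp only: card.empty) simp
  next
    case False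
    then have F: "x = t m" using m by blast
    have "{e\<in>M. t e = x} = {m}" using F m(1) t_inj by auto
    moreover have Z: "{e\<in>M. s e = x} = {}"
    proof -
      have False if "e \<in> M" "s e = x" for e using st_ne[of e m] that F m(1) by simp
      then show ?thesis by blast
    qed
    ultimately show ?thesis unfolding deg_def E en by (simp only: card.empty) simp
  qed
qed

lemma leaf_crit:
  assumes u: "\<forall>e' y. lk e' d y \<longrightarrow> e' = e" and l: "lk e d x" and ne: "x \<noteq> d" and dv: "d \<in> verts G"
  shows "d \<in> leaves G"
proof -
  have e: "e \<in> edges G" using l unfolding lk_def by auto
  have A: "{e'\<in>edges G. s e' = d} \<subseteq> {e}"
  proof
    fix e' assume "e' \<in> {e'\<in>edges G. s e' = d}"
    then have "e' \<in> edges G" "ends G e' = (d, t e')" by (auto simp: prod_eq_iff)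
    then have "lk e' d (t e')" unfolding lk_def by blast
    then show "e' \<in> {e}" using u by blast
  qed
  have B: "{e'\<in>edges G. t e' = d} \<subseteq> {e}"
  proof
    fix e' assume "e' \<in> {e'\<in>edges G. t e' = d}"
    then have "e' \<in> edges G" "ends G e' = (s e', d)" by (auto simp: prod_eq_iff)
    then have "lk e' d (s e')" unfolding lk_def by blast
    then show "e' \<in> {e}" using u by blast
  qed
  have "deg G d = 1"
  proof (cases "ends G e = (d,x)")
    case True
    then have "{e'\<in>edges G. s e' = d} = {e}" using A e by auto
    moreover have Z: "{e'\<in>edges G. t e' = d} = {}"
    proof -
      have False if h: "e' \<in> edges G" "t e' = d" for e'
      proof -
        have "e' = e" using B h by blast
        then show False using h True ne by simp
      qed
      then show ?thesis by blast
    qed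
    ultimately show ?thesis unfolding deg_def by (simp only: card.empty) simp
  next
    case False
    then have T: "ends G e = (x,d)" using l unfolding lk_def by auto
    then have "{e'\<in>edges G. t e' = d} = {e}" using B e by auto
    moreover have Z: "{e'\<in>edges G. s e' = d} = {}"
    proof -
      have False if h: "e' \<in> edges G" "s e' = d" for e'
      proof -
        have "e' = e" using A h by blast
        then show False using h T ne by simp
      qed
      then show ?thesis by blast
    qed
    ultimately show ?thesis unfolding deg_def by (simp only: card.empty) simp
  qed
  then show ?thesis unfolding leaves_def using dv by simp
qed

lemma nbhd_ND: "nbhd G x - P = ND x" unfolding nbhd_def ND_def using DP by auto

lemma part3: "x \<in> P \<Longrightarrow> card (nbhd G x - P) = 1 \<or> (nbhd G x - P \<noteq> {} \<and> nbhd G x - P \<subseteq> leaves G)"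
proof -
  assume x: "x \<in> P"
  show ?thesis
  proof (cases "card (ND x) = 1")
    case True then show ?thesis using nbhd_ND by simp
  next
    case False
    have "d \<in> leaves G" if d: "d \<in> ND x" for d
    proof -
      have "ND x \<noteq> {d}" using False by auto
      then obtain d' where d': "d' \<in> ND x" "d' \<noteq> d" using d by blast
      obtain e where e: "lk e x d" using d unfolding ND_def adj_lk by auto
      have "\<forall>e' y. lk e' d y \<longrightarrow> e' = e" using C2[OF x d d'(1)] d' e by auto
      moreover have "d \<in> D" using d unfolding ND_def by auto
      ultimately show ?thesis using leaf_crit[of d e x] e lk_sym x DP by blast
    qed
    then show ?thesis using nbhd_ND ND_ne x by auto
  qed
qed

lemma adj_sym: "adj G x y \<Longrightarrow> adj G y x" using adj_lk lk_sym by blast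

definition rep :: "'v \<Rightarrow> 'v" where "rep a = (SOME d. d \<in> ND a)"

lemma rep_ND: "a \<in> P \<Longrightarrow> rep a \<in> ND a"
  unfolding rep_def using ND_ne by (simp add: some_in_eq)

lemma rep_D: "a \<in> P \<Longrightarrow> rep a \<in> D" using rep_ND unfolding ND_def by blast

lemma rep_adj: "a \<in> P \<Longrightarrow> adj G (rep a) a" using rep_ND adj_sym unfolding ND_def by blast

definition HH :: "('v,'e) mgraph" where
  "HH = \<lparr>verts = rep ` P, edges = M, ends = (\<lambda>m. (rep (s m), rep (t m)))\<rparr>"

lemma HH_simps: "verts HH = rep ` P" "edges HH = M" "ends HH m = (rep (s m), rep (t m))"
  unfolding HH_def by simp_all

lemma endpH: "endp HH b m = rep (endp G b m)" unfolding endp_def HH_simps by simp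

lemma endp_P: "m \<in> M \<Longrightarrow> endp G b m \<in> P" unfolding endp_def using M_ends by simp

lemma endp_inj: assumes "m \<in> M" "m' \<in> M" "endp G b m = endp G b' m'" shows "m = m' \<and> b = b'"
proof (cases b; cases b')
  assume "b" "b'" then show ?thesis using assms s_inj unfolding endp_def by simp
next
  assume "b" "\<not> b'" then show ?thesis using assms st_ne unfolding endp_def by auto
next
  assume "\<not> b" "b'" then show ?thesis using assms st_ne unfolding endp_def by (metis (full_types))
next
  assume "\<not> b" "\<not> b'" then show ?thesis using assms t_inj unfolding endp_def by simp
qed

lemma P_endp: "a \<in> P \<Longrightarrow> \<exists>m b. m \<in> M \<and> a = endp G b m"
proof -
  assume "a \<in> P"
  then obtain m where "m \<in> M" "a = s m \<or> a = t m" using M_cov by blast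
  then show ?thesis unfolding endp_def by (metis (full_types))
qed

lemma fin_P: "finite P" using fin(1) DP(2) by (metis finite_Un)
lemma fin_M: "finite M" using fin(2) M_sub finite_subset by blast

lemma wfH: "wf_mgraph HH"
  unfolding wf_mgraph_def HH_simps using fin_P fin_M M_ends by auto

definition R :: "'v \<Rightarrow> 'v set" where "R v = {b\<in>P. rep b = v}"

lemma degH: "deg HH v = card (R v)"
proof -
  let ?A = "{m\<in>M. rep (s m) = v}" and ?B = "{m\<in>M. rep (t m) = v}"
  have d: "deg HH v = card ?A + card ?B" unfolding deg_def HH_simps by simp
  have ia: "inj_on s ?A" using s_inj by (auto intro: inj_onI)
  have ib: "inj_on t ?B" using t_inj by (auto intro: inj_onI)
  have ca: "card ?A = card (s ` ?A)" using ia card_image by fastforce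
  have cb: "card ?B = card (t ` ?B)" using ib card_image by fastforce
  have fa: "finite (s ` ?A)" "finite (t ` ?B)" using fin_M by auto
  have dj: "s ` ?A \<inter> t ` ?B = {}" using st_ne by blast
  have un: "s ` ?A \<union> t ` ?B = R v"
  proof
    show "s ` ?A \<union> t ` ?B \<subseteq> R v" unfolding R_def using M_ends by auto
    show "R v \<subseteq> s ` ?A \<union> t ` ?B"
    proof
      fix b assume "b \<in> R v"
      then have b: "b \<in> P" "rep b = v" unfolding R_def by auto
      then obtain m where "m \<in> M" "b = s m \<or> b = t m" using M_cov by blast
      then show "b \<in> s ` ?A \<union> t ` ?B" using b by auto
    qed
  qed
  show ?thesis using d ca cb card_Un_disjoint[OF fa dj] un by simp
qed

lemma R_fin: "finite (R v)" using fin_P unfolding R_def by simp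

lemma noisoH: "no_isolated HH"
  unfolding no_isolated_def
proof
  fix v assume "v \<in> verts HH"
  then obtain a where a: "a \<in> P" "v = rep a" unfolding HH_simps by blast
  then have "a \<in> R v" unfolding R_def by simp
  then have "card (R v) \<noteq> 0" using R_fin by auto
  then show "deg HH v \<noteq> 0" using degH by simp
qed

lemma L1: assumes "v \<in> leaves HH" "b \<in> P" "b' \<in> P" "rep b = v" "rep b' = v" shows "b = b'"
proof -
  have "card (R v) = 1" using assms(1) degH unfolding leaves_def by simp
  then obtain x where "R v = {x}" using card_1_singletonE by blast
  moreover have "b \<in> R v" "b' \<in> R v" using assms unfolding R_def by auto
  ultimately show ?thesis by simp
qed

lemma L2: assumes "v \<in> verts HH" "v \<notin> leaves HH"
  shows "\<exists>b b'. b \<in> P \<and> b' \<in> P \<and> b \<noteq> b' \<and> rep b = v \<and> rep b' = v"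
proof -
  obtain a where a: "a \<in> P" "v = rep a" using assms(1) unfolding HH_simps by blast
  have c: "card (R v) \<noteq> 1" using assms degH unfolding leaves_def by simp
  have "a \<in> R v" using a unfolding R_def by simp
  moreover have "R v \<noteq> {a}" using c by auto
  ultimately obtain b where "b \<in> R v" "b \<noteq> a" by blast
  then show ?thesis using a \<open>a \<in> R v\<close> unfolding R_def by blast
qed

lemma K1: assumes v: "v \<in> verts HH" "v \<notin> leaves HH" and a: "a \<in> P" "adj G v a"
  shows "ND a = {v}"
proof -
  obtain b b' where bb: "b \<in> P" "b' \<in> P" "b \<noteq> b'" "rep b = v" "rep b' = v" using L2 v by blast
  have vD: "v \<in> D" using rep_D bb by blast
  have "adj G (rep b) b" "adj G (rep b') b'" using rep_adj bb(1,2) by blast+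
  then have adjb: "adj G v b" "adj G v b'" using bb(4,5) by metis+
  show ?thesis
  proof (cases "a = b")
    case True
    then show ?thesis using C3[OF vD a(1) bb(2)] bb adjb a by blast
  next
    case False
    then show ?thesis using C3[OF vD a(1) bb(1)] bb adjb a by blast
  qed
qed

lemma K1': assumes "v \<in> verts HH" "v \<notin> leaves HH" "a \<in> P" "adj G v a" shows "rep a = v"
  using K1[OF assms] rep_ND[OF assms(3)] by blast

definition pb :: "'v \<Rightarrow> 'v" where "pb v = (SOME b. b \<in> P \<and> rep b = v)"

lemma pb: "v \<in> verts HH \<Longrightarrow> pb v \<in> P \<and> rep (pb v) = v"
  unfolding pb_def HH_simps by (rule someI_ex) blast

lemma pb_leaf: "v \<in> leaves HH \<Longrightarrow> a \<in> P \<Longrightarrow> rep a = v \<Longrightarrow> pb v = a"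
  using L1 pb unfolding leaves_def by blast

definition cls :: "'v \<Rightarrow> 'v set" where "cls v = ND (pb v)"
definition al :: "'v \<Rightarrow> nat" where "al v = card (cls v)"
definition en :: "'v \<Rightarrow> nat \<Rightarrow> 'v" where "en v = (SOME h. bij_betw h {1..al v} (cls v))"

lemma en_bij: "bij_betw (en v) {1..al v} (cls v)"
proof -
  have "\<exists>h. bij_betw h {1..card (cls v)} (cls v)"
    by (rule ex_bij_betw_nat_finite_1) (simp add: cls_def ND_fin)
  then show ?thesis unfolding en_def al_def by (rule someI_ex)
qed

lemma al_pos: "v \<in> leaves HH \<Longrightarrow> 1 \<le> al v"
proof -
  assume "v \<in> leaves HH"
  then have "v \<in> verts HH" unfolding leaves_def by simp
  then have "pb v \<in> P" using pb by blast
  then have "cls v \<noteq> {}" unfolding cls_def using ND_ne by blast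
  then show ?thesis unfolding al_def cls_def using ND_fin
    by (simp add: Suc_leI card_gt_0_iff)
qed

lemma en_in: "i \<in> {1..al v} \<Longrightarrow> en v i \<in> cls v" using en_bij bij_betwE by blast
lemma en_inj: "i \<in> {1..al v} \<Longrightarrow> j \<in> {1..al v} \<Longrightarrow> en v i = en v j \<Longrightarrow> i = j"
  using en_bij unfolding bij_betw_def inj_on_def by blast
lemma en_surj: assumes "d \<in> cls v" shows "\<exists>i\<in>{1..al v}. en v i = d"
proof -
  have "d \<in> en v ` {1..al v}" using en_bij[of v] assms unfolding bij_betw_def by simp
  then show ?thesis by blast
qed

lemma cls_leaf: "w \<in> leaves HH \<Longrightarrow> cls w = ND (pb w) \<and> pb w \<in> P \<and> rep (pb w) = w"
  unfolding cls_def using pb unfolding leaves_def by blast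

abbreviation "SS \<equiv> S2 HH al"

lemma vS: "Old v \<in> verts SS \<longleftrightarrow> v \<in> verts HH \<and> v \<notin> leaves HH"
  "LCopy v i \<in> verts SS \<longleftrightarrow> v \<in> leaves HH \<and> 1 \<le> i \<and> i \<le> al v"
  "New m b \<in> verts SS \<longleftrightarrow> m \<in> M"
  unfolding S2_def by (auto simp: HH_simps(2))

lemma eS: "EMid m \<in> edges SS \<longleftrightarrow> m \<in> M"
  "EAtt m b \<in> edges SS \<longleftrightarrow> m \<in> M \<and> rep (endp G b m) \<notin> leaves HH"
  "ELeaf m b i \<in> edges SS \<longleftrightarrow> m \<in> M \<and> rep (endp G b m) \<in> leaves HH \<and> 1 \<le> i \<and> i \<le> al (rep (endp G b m))"
  unfolding S2_def by (auto simp: HH_simps(2) endpH)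

lemma endsS: "ends SS (EMid m) = (New m True, New m False)"
  "ends SS (EAtt m b) = (Old (rep (endp G b m)), New m b)"
  "ends SS (ELeaf m b i) = (LCopy (rep (endp G b m)) i, New m b)"
  unfolding S2_def by (simp_all add: endpH)

definition phi :: "('v,'e) s2vert \<Rightarrow> 'v" where
  "phi x = (case x of Old v \<Rightarrow> v | LCopy v i \<Rightarrow> en v i | New m b \<Rightarrow> endp G b m)"

definition link :: "'v \<Rightarrow> 'v \<Rightarrow> 'e" where "link x y = (SOME e. lk e x y)"

definition psi :: "('v,'e) s2edge \<Rightarrow> 'e" where
  "psi x = (case x of EMid m \<Rightarrow> m
     | EAtt m b \<Rightarrow> link (rep (endp G b m)) (endp G b m)
     | ELeaf m b i \<Rightarrow> link (en (rep (endp G b m)) i) (endp G b m))"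

lemma phi_simps: "phi (Old v) = v" "phi (LCopy v i) = en v i" "phi (New m b) = endp G b m"
  unfolding phi_def by simp_all

lemma psi_simps: "psi (EMid m) = m"
  "psi (EAtt m b) = link (rep (endp G b m)) (endp G b m)"
  "psi (ELeaf m b i) = link (en (rep (endp G b m)) i) (endp G b m)"
  unfolding psi_def by simp_all

lemma link_lk: "adj G x y \<Longrightarrow> lk (link x y) x y"
  unfolding link_def adj_lk by (rule someI_ex)

lemma verts_HH_D: "v \<in> verts HH \<Longrightarrow> v \<in> D" unfolding HH_simps using rep_D by blast

lemma en_ND: "w \<in> leaves HH \<Longrightarrow> 1 \<le> i \<Longrightarrow> i \<le> al w \<Longrightarrow> en w i \<in> ND (pb w) \<and> pb w \<in> P \<and> rep (pb w) = w"
  using en_in[of i w] cls_leaf[of w] by simp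

lemma phi_in: "x \<in> verts SS \<Longrightarrow> phi x \<in> verts G"
proof (cases x)
  case (Old v) then show "x \<in> verts SS \<Longrightarrow> ?thesis" using verts_HH_D DP(2) by (auto simp: vS phi_simps)
next
  case (LCopy v i) then show "x \<in> verts SS \<Longrightarrow> ?thesis" using en_ND[of v i] DP(2)
    unfolding ND_def by (auto simp: vS phi_simps)
next
  case (New m b) then show "x \<in> verts SS \<Longrightarrow> ?thesis" using endp_P DP(2) by (auto simp: vS phi_simps)
qed

lemma OL: assumes v: "v \<in> verts HH" "v \<notin> leaves HH" and w: "w \<in> leaves HH" "1 \<le> i" "i \<le> al w"
  and eq: "en w i = v" shows False
proof -
  have h: "en w i \<in> ND (pb w)" "pb w \<in> P" "rep (pb w) = w" using en_ND[OF w] by blast+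
  have "v \<in> ND (pb w)" using h(1) eq by simp
  then have "adj G (pb w) v" unfolding ND_def by blast
  then have "adj G v (pb w)" by (rule adj_sym)
  then have "rep (pb w) = v" by (rule K1'[OF v h(2)])
  then have "w = v" using h(3) by simp
  then show False using v(2) w(1) by simp
qed

lemma LL: assumes w: "w \<in> leaves HH" "1 \<le> i" "i \<le> al w" and w': "w' \<in> leaves HH" "1 \<le> j" "j \<le> al w'"
  and eq: "en w i = en w' j" shows "w = w' \<and> i = j"
proof -
  define d where "d = en w i"
  have h: "d \<in> ND (pb w)" "pb w \<in> P" "rep (pb w) = w" using en_ND[OF w] unfolding d_def by blast+
  have h'0: "en w' j \<in> ND (pb w') \<and> pb w' \<in> P \<and> rep (pb w') = w'" by (rule en_ND[OF w'])
  have "d = en w' j" unfolding d_def by (rule eq)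
  then have h': "d \<in> ND (pb w')" "pb w' \<in> P" "rep (pb w') = w'" using h'0 by blast+
  have ww: "w = w'"
  proof (cases "pb w = pb w'")
    case True then show ?thesis using h(3) h'(3) by metis
  next
    case False
    have dD: "d \<in> D" using h(1) unfolding ND_def by blast
    have a1: "adj G d (pb w)" using h(1) adj_sym unfolding ND_def by blast
    have a2: "adj G d (pb w')" using h'(1) adj_sym unfolding ND_def by blast
    have n1: "ND (pb w) = {d}" by (rule C3[OF dD h(2) h'(2) False a1 a2])
    have "rep (pb w) \<in> ND (pb w)" by (rule rep_ND[OF h(2)])
    then have 1: "w = d" using n1 h(3) by simp
    have n2: "ND (pb w') = {d}" by (rule C3[OF dD h'(2) h(2) _ a2 a1]) (use False in simp)
    have "rep (pb w') \<in> ND (pb w')" by (rule rep_ND[OF h'(2)])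
    then have 2: "w' = d" using n2 h'(3) by simp
    from 1 2 show ?thesis by simp
  qed
  have "i \<in> {1..al w}" "j \<in> {1..al w}" using w w' ww by auto
  moreover have "en w i = en w j" using eq ww by simp
  ultimately have "i = j" by (rule en_inj)
  then show ?thesis using ww by simp
qed

lemma phi_inj: "inj_on phi (verts SS)"
proof (rule inj_onI)
  fix x y assume x: "x \<in> verts SS" and y: "y \<in> verts SS" and eq: "phi x = phi y"
  show "x = y"
  proof (cases x)
    case (Old v)
    then have v: "v \<in> verts HH" "v \<notin> leaves HH" using x vS by simp_all
    then have vD: "v \<in> D" using verts_HH_D by blast
    show ?thesis
    proof (cases y)
      case (Old v') then show ?thesis using eq \<open>x = Old v\<close> by (simp add: phi_simps)
    next
      case (LCopy w i)
      have "w \<in> leaves HH" "1 \<le> i" "i \<le> al w" using y LCopy vS by simp_all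
      moreover have "en w i = v" using eq Old LCopy by (simp add: phi_simps)
      ultimately show ?thesis using OL[OF v] by blast
    next
      case (New m b)
      have "m \<in> M" using y New vS by simp
      then have "endp G b m \<in> P" by (rule endp_P)
      moreover have "endp G b m = v" using eq Old New by (simp add: phi_simps)
      ultimately show ?thesis using vD DPd by metis
    qed
  next
    case (LCopy w i)
    then have w: "w \<in> leaves HH" "1 \<le> i" "i \<le> al w" using x vS by simp_all
    then have wD: "en w i \<in> D" using en_ND[OF w] unfolding ND_def by blast
    show ?thesis
    proof (cases y)
      case (Old v)
      have v: "v \<in> verts HH" "v \<notin> leaves HH" using y Old vS by simp_all
      moreover have "en w i = v" using eq Old LCopy by (simp add: phi_simps)
      ultimately show ?thesis using OL[OF v w] by blast
    next
      case (LCopy w' j)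
      have w': "w' \<in> leaves HH" "1 \<le> j" "j \<le> al w'" using y LCopy vS by simp_all
      have "en w i = en w' j" using eq \<open>x = LCopy w i\<close> LCopy by (simp add: phi_simps)
      then have "w = w' \<and> i = j" by (rule LL[OF w w'])
      then show ?thesis using \<open>x = LCopy w i\<close> LCopy by simp
    next
      case (New m b)
      have "m \<in> M" using y New vS by simp
      then have "endp G b m \<in> P" by (rule endp_P)
      moreover have "endp G b m = en w i" using eq LCopy New by (simp add: phi_simps)
      ultimately show ?thesis using wD DPd by metis
    qed
  next
    case (New m b)
    then have "m \<in> M" using x vS by simp
    then have mP: "endp G b m \<in> P" by (rule endp_P)
    show ?thesis
    proof (cases y)
      case (Old v)
      have "v \<in> verts HH" using y Old vS by simp
      then have "v \<in> D" by (rule verts_HH_D)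
      moreover have "endp G b m = v" using eq Old New by (simp add: phi_simps)
      ultimately show ?thesis using mP DPd by metis
    next
      case (LCopy w j)
      have w: "w \<in> leaves HH" "1 \<le> j" "j \<le> al w" using y LCopy vS by simp_all
      then have wD: "en w j \<in> D" using en_ND[OF w] unfolding ND_def by blast
      moreover have "endp G b m = en w j" using eq LCopy New by (simp add: phi_simps)
      ultimately show ?thesis using mP DPd by metis
    next
      case (New m' b')
      have "m' \<in> M" using y New vS by simp
      moreover have "endp G b m = endp G b' m'" using eq \<open>x = New m b\<close> New by (simp add: phi_simps)
      ultimately have "m = m' \<and> b = b'" using endp_inj \<open>m \<in> M\<close> by blast
      then show ?thesis using \<open>x = New m b\<close> New by simp
    qed
  qed
qed

lemma Dcover: assumes d: "d \<in> D"
  shows "(d \<in> verts HH \<and> d \<notin> leaves HH) \<or> (\<exists>w i. w \<in> leaves HH \<and> 1 \<le> i \<and> i \<le> al w \<and> en w i = d)"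
proof (cases "d \<in> verts HH")
  case True
  show ?thesis
  proof (cases "d \<in> leaves HH")
    case False then show ?thesis using True by blast
  next
    case L: True
    have "d \<in> cls d" using cls_leaf[OF L] rep_ND by metis
    then obtain i where "i \<in> {1..al d}" "en d i = d" using en_surj by blast
    then show ?thesis using L by auto
  qed
next
  case False
  obtain a e where a: "a \<in> P" "lk e d a" using Pdom d by blast
  have dN: "d \<in> ND a" using a d lk_sym adj_lk unfolding ND_def by blast
  let ?w = "rep a"
  have wv: "?w \<in> verts HH" using a unfolding HH_simps by blast
  have wl: "?w \<in> leaves HH"
  proof (rule ccontr)
    assume "?w \<notin> leaves HH"
    then have "ND a = {?w}" using K1[OF wv _ a(1) rep_adj[OF a(1)]] by blast
    then have "d = rep a" using dN by simp
    then show False using False wv by simp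
  qed
  then have "pb ?w = a" using pb_leaf a by blast
  then have "d \<in> cls ?w" using dN unfolding cls_def by simp
  then obtain i where "i \<in> {1..al ?w}" "en ?w i = d" using en_surj by blast
  then show ?thesis using wl by auto
qed

lemma phi_surj: "phi ` verts SS = verts G"
proof
  show "phi ` verts SS \<subseteq> verts G" using phi_in by blast
  show "verts G \<subseteq> phi ` verts SS"
  proof
    fix z assume "z \<in> verts G"
    then have "z \<in> D \<or> z \<in> P" using DP(2) by blast
    then show "z \<in> phi ` verts SS"
    proof
      assume "z \<in> D"
      then consider "z \<in> verts HH" "z \<notin> leaves HH" | w i where "w \<in> leaves HH" "1 \<le> i" "i \<le> al w" "en w i = z"
        using Dcover by blast
      then show ?thesis
      proof cases
        case 1 then have "Old z \<in> verts SS" using vS by simp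
        then show ?thesis using phi_simps(1)[of z] by (metis image_eqI)
      next
        case (2 w i) then have "LCopy w i \<in> verts SS" using vS by simp
        then show ?thesis using phi_simps(2)[of w i] 2 by (metis image_eqI)
      qed
    next
      assume "z \<in> P"
      then obtain m b where "m \<in> M" "z = endp G b m" using P_endp by blast
      then have "New m b \<in> verts SS" "phi (New m b) = z" using vS phi_simps by simp_all
      then show ?thesis by (metis image_eqI)
    qed
  qed
qed

lemma wkS: "x \<in> edges SS \<Longrightarrow> fst (ends SS x) \<in> verts SS \<and> snd (ends SS x) \<in> verts SS"
proof (cases x)
  case (EMid m) then show "x \<in> edges SS \<Longrightarrow> ?thesis" by (simp add: eS endsS vS)
next
  case (EAtt m b) then show "x \<in> edges SS \<Longrightarrow> ?thesis"
    using endp_P[of m b] by (auto simp: eS endsS vS HH_simps)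
next
  case (ELeaf m b i) then show "x \<in> edges SS \<Longrightarrow> ?thesis" by (simp add: eS endsS vS)
qed

lemma lkS: "x \<in> edges SS \<Longrightarrow> lk (psi x) (phi (fst (ends SS x))) (phi (snd (ends SS x)))"
proof (cases x)
  case (EMid m) then show "x \<in> edges SS \<Longrightarrow> ?thesis"
    using M_sub unfolding lk_def by (auto simp: eS endsS phi_simps psi_simps endp_def)
next
  case (EAtt m b)
  assume x: "x \<in> edges SS"
  then have m: "m \<in> M" using EAtt eS by simp
  have "adj G (rep (endp G b m)) (endp G b m)" using rep_adj endp_P[OF m] by blast
  then show ?thesis using link_lk EAtt by (simp add: endsS phi_simps psi_simps)
next
  case (ELeaf m b i)
  assume x: "x \<in> edges SS"
  let ?a = "endp G b m" let ?w = "rep ?a"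
  have h: "m \<in> M" "?w \<in> leaves HH" "1 \<le> i" "i \<le> al ?w" using ELeaf x eS by auto
  have aP: "?a \<in> P" using endp_P h by blast
  have "pb ?w = ?a" using pb_leaf[OF h(2) aP] by simp
  then have "en ?w i \<in> ND ?a" using en_ND[OF h(2-4)] by simp
  then have "adj G (en ?w i) ?a" using adj_sym unfolding ND_def by blast
  then show ?thesis using link_lk ELeaf by (simp add: endsS phi_simps psi_simps)
qed

lemma endsS_inj: "ends SS x = ends SS y \<Longrightarrow> x = y"
  by (cases x; cases y) (auto simp: endsS)

lemma endsS_noswap: "ends SS x = (snd (ends SS y), fst (ends SS y)) \<Longrightarrow> False"
  by (cases x; cases y) (auto simp: endsS)

lemma psi_inj: "inj_on psi (edges SS)"
proof (rule inj_onI)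
  fix x y assume x: "x \<in> edges SS" and y: "y \<in> edges SS" and eq: "psi x = psi y"
  obtain p q where pq: "ends SS x = (p,q)" by fastforce
  obtain p' q' where pq': "ends SS y = (p',q')" by fastforce
  have vv: "p \<in> verts SS" "q \<in> verts SS" "p' \<in> verts SS" "q' \<in> verts SS"
    using wkS[OF x] wkS[OF y] pq pq' by auto
  have l1: "lk (psi x) (phi p) (phi q)" using lkS[OF x] pq by simp
  have l2: "lk (psi x) (phi p') (phi q')" using lkS[OF y] pq' eq by simp
  have "(phi p = phi p' \<and> phi q = phi q') \<or> (phi p = phi q' \<and> phi q = phi p')"
    using l1 l2 unfolding lk_def by auto
  then have "(p = p' \<and> q = q') \<or> (p = q' \<and> q = p')"
    using phi_inj vv unfolding inj_on_def by blast
  then show "x = y"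
  proof
    assume "p = p' \<and> q = q'" then show ?thesis using pq pq' endsS_inj by simp
  next
    assume "p = q' \<and> q = p'" then show ?thesis using pq pq' endsS_noswap[of x y] by simp
  qed
qed

lemma psi_in: "x \<in> edges SS \<Longrightarrow> psi x \<in> edges G" using lkS unfolding lk_def by blast

lemma psi_surj_DP: assumes l: "lk e d a" and d: "d \<in> D" and a: "a \<in> P"
  shows "e \<in> psi ` edges SS"
proof -
  obtain m b where m: "m \<in> M" "a = endp G b m" using P_endp a by blast
  let ?w = "rep a"
  have dN: "d \<in> ND a" using l d lk_sym adj_lk unfolding ND_def by blast
  have wv: "?w \<in> verts HH" using a unfolding HH_simps by blast
  show ?thesis
  proof (cases "?w \<in> leaves HH")
    case False
    then have "ND a = {?w}" using K1[OF wv _ a rep_adj[OF a]] by blast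
    then have dw: "d = ?w" using dN by blast
    have x: "EAtt m b \<in> edges SS" using m False eS by simp
    have "lk (psi (EAtt m b)) ?w a" using link_lk[OF rep_adj[OF a]] m by (simp add: psi_simps)
    then have "psi (EAtt m b) = e" using C1[of e d a] l dw d a by blast
    then show ?thesis using x by (metis image_eqI)
  next
    case True
    then have "pb ?w = a" using pb_leaf a by blast
    then have "d \<in> cls ?w" using dN unfolding cls_def by simp
    then obtain i where i: "i \<in> {1..al ?w}" "en ?w i = d" using en_surj by blast
    have x: "ELeaf m b i \<in> edges SS" using m True eS i by simp
    have "adj G d a" using l adj_lk by blast
    then have "lk (psi (ELeaf m b i)) d a" using link_lk m i by (simp add: psi_simps)
    then have "psi (ELeaf m b i) = e" using C1[of e d a] l d a by blast
    then show ?thesis using x by (metis image_eqI)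
  qed
qed

lemma psi_surj: "psi ` edges SS = edges G"
proof
  show "psi ` edges SS \<subseteq> edges G" using psi_in by blast
  show "edges G \<subseteq> psi ` edges SS"
  proof
    fix e assume e: "e \<in> edges G"
    have ee: "ends G e = (s e, t e)" by simp
    show "e \<in> psi ` edges SS"
    proof (cases "s e \<in> P \<and> t e \<in> P")
      case True
      then have "e \<in> M" using F2 e by blast
      then have "EMid e \<in> edges SS" "psi (EMid e) = e" using eS psi_simps by simp_all
      then show ?thesis by (metis image_eqI)
    next
      case False
      show ?thesis
      proof (cases "s e \<in> D")
        case True
        then have "t e \<notin> D" using F1 e by blast
        then have "t e \<in> P" using ends_in e by blast
        moreover have "lk e (s e) (t e)" using e ee unfolding lk_def by blast
        ultimately show ?thesis using psi_surj_DP True by blast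
      next
        case nd: False
        then have sP: "s e \<in> P" using ends_in e by blast
        then have "t e \<in> D" using False ends_in e by blast
        moreover have "lk e (t e) (s e)" using e ee unfolding lk_def by blast
        ultimately show ?thesis using psi_surj_DP sP by blast
      qed
    qed
  qed
qed

lemma part4: "\<exists>(H :: ('v,'e) mgraph) \<alpha>. wf_mgraph H \<and> no_isolated H \<and>
           (\<forall>v\<in>leaves H. 1 \<le> \<alpha> v) \<and> mg_iso G (S2 H \<alpha>)"
proof -
  have "mg_iso G SS"
  proof (rule iso_from_inv)
    show "bij_betw phi (verts SS) (verts G)" using phi_inj phi_surj unfolding bij_betw_def by blast
    show "bij_betw psi (edges SS) (edges G)" using psi_inj psi_surj unfolding bij_betw_def by blast
    show "\<forall>x\<in>edges SS. fst (ends SS x) \<in> verts SS \<and> snd (ends SS x) \<in> verts SS" using wkS by blast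
    show "\<forall>x\<in>edges SS. ends G (psi x) = (phi (fst (ends SS x)), phi (snd (ends SS x)))
              \<or> ends G (psi x) = (phi (snd (ends SS x)), phi (fst (ends SS x)))"
      using lkS unfolding lk_def by blast
  qed
  then show ?thesis using wfH noisoH al_pos by blast
qed

end

theorem theorem4p5:
  fixes G :: "('v,'e) mgraph" and D P :: "'v set"
  assumes "wf_mgraph G" and "minimal_dpdp_graph G" and "dp_pair G D P"
  shows "maximal_independent G D
    \<and> (\<forall>x\<in>P. deg (induced G P) x = 1)
    \<and> (\<forall>x\<in>P. card (nbhd G x - P) = 1 \<or> (nbhd G x - P \<noteq> {} \<and> nbhd G x - P \<subseteq> leaves G))
    \<and> (\<exists>(H :: ('v,'e) mgraph) \<alpha>. wf_mgraph H \<and> no_isolated H \<and>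
           (\<forall>v\<in>leaves H. 1 \<le> \<alpha> v) \<and> mg_iso G (S2 H \<alpha>))"
proof -
  obtain M where M: "perfect_matching_induced G P M"
    using assms(3) unfolding dp_pair_def paired_dominating_def by blast
  interpret mdp G D P M using assms M by unfold_locales
  show ?thesis using part1 part2 part3 part4 by blast
qed

end
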